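(* Let $m\ge1$, let $\Sigma$ be a positive definite real $m\times m$ matrix and let $r\ge1$. For $a\ge 0$ define \[ D_{r,\Sigma,a}:=\inf_{\Lambda}\sup_{\Vert h\Vert\le a}\left\Vert \Lambda\left(\mathrm{N}(h,\Sigma)\right)-\mathrm{N}(\sqrt{r}\,h,\Sigma)\right\Vert_1, \qquad D_{r,\Sigma}:=\inf_{\Lambda}\sup_{h\in\mathbb{R}^m}\left\Vert \Lambda\left(\mathrm{N}(h,\Sigma)\right)-\mathrm{N}(\sqrt{r}\,h,\Sigma)\right\Vert_1, \] with infima over all Markov kernels $\Lambda$ from $\mathbb{R}^m$ to $\mathbb{R}^m$. Then $a\mapsto D_{r,\Sigma,a}$ is nondecreasing and \[ \lim_{a\to\infty}D_{r,\Sigma,a}=D_{r,\Sigma}. \]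
   Context: $\mathrm{N}(\mu,\Sigma)$ is the Gaussian distribution with mean $\mu$ and covariance $\Sigma$; $\Lambda(P)$ is the image of the distribution $P$ under the Markov kernel $\Lambda$; $\Vert\cdot\Vert_1$ is the total variation ($L^1$) norm. *)

theory Defs
  imports "HOL-Probability.Probability"
begin

definition pos_def_matrix :: "real^'m^'m \<Rightarrow> bool" where
  "pos_def_matrix S \<longleftrightarrow> transpose S = S \<and> (\<forall>x. x \<noteq> 0 \<longrightarrow> x \<bullet> (S *v x) > 0)"

definition gaussian :: "real^'m \<Rightarrow> real^'m^'m \<Rightarrow> (real^'m) measure" where
  "gaussian h S = density lborel (\<lambda>x. ennreal
      ((2 * pi) powr (- real CARD('m) / 2) * det S powr (- 1 / 2)
       * exp (- (1 / 2) * ((x - h) \<bullet> (matrix_inv S *v (x - h))))))"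

definition markov_kernels :: "(real^'m \<Rightarrow> (real^'m) measure) set" where
  "markov_kernels = {K. K \<in> borel \<rightarrow>\<^sub>M prob_algebra borel}"

definition kernel_image :: "(real^'m \<Rightarrow> (real^'m) measure) \<Rightarrow> (real^'m) measure \<Rightarrow> (real^'m) measure" where
  "kernel_image K P = P \<bind> K"

text \<open>Total variation (L1) norm of P - Q for probability measures:
  the L1 norm of the signed measure P - Q, i.e. 2 sup_A |P A - Q A|.\<close>
definition tv_norm :: "'a measure \<Rightarrow> 'a measure \<Rightarrow> real" where
  "tv_norm P Q = 2 * (SUP A \<in> sets P. \<bar>measure P A - measure Q A\<bar>)"

definition D_bounded :: "real \<Rightarrow> real^'m^'m \<Rightarrow> real \<Rightarrow> real" where
  "D_bounded r S a = (INF K \<in> markov_kernels. SUP h \<in> {h :: real^'m. norm h \<le> a}.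
      tv_norm (kernel_image K (gaussian h S)) (gaussian (sqrt r *\<^sub>R h) S))"

definition D_full :: "real \<Rightarrow> real^'m^'m \<Rightarrow> real" where
  "D_full r S = (INF K \<in> markov_kernels. SUP h \<in> (UNIV :: (real^'m) set).
      tv_norm (kernel_image K (gaussian h S)) (gaussian (sqrt r *\<^sub>R h) S))"

end

theory Submission
  imports Defs
begin


lemma tv_nonneg_bound:
  assumes P: "finite_measure P" and Q: "finite_measure Q"
  shows "0 \<le> tv_norm P Q \<and> tv_norm P Q \<le> 2 * (measure P (space P) + measure Q (space Q))"
proof -
  have b: "\<bar>measure P A - measure Q A\<bar> \<le> measure P (space P) + measure Q (space Q)" if "A \<in> sets P" for A
  proof -
    have "measure P A \<le> measure P (space P)" using that finite_measure.bounded_measure[OF P] by blast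
    moreover have "measure Q A \<le> measure Q (space Q)"
    proof (cases "A \<in> sets Q")
      case True then show ?thesis using finite_measure.bounded_measure[OF Q] by blast
    next
      case False then show ?thesis by (simp add: measure_notin_sets)
    qed
    ultimately show ?thesis unfolding abs_le_iff using measure_nonneg[of P A] measure_nonneg[of Q A] by linarith
  qed
  have bdd: "bdd_above ((\<lambda>A. \<bar>measure P A - measure Q A\<bar>) ` sets P)"
    using b by (intro bdd_aboveI2) 
  have ne: "sets P \<noteq> {}" by auto
  have "0 \<le> (SUP A \<in> sets P. \<bar>measure P A - measure Q A\<bar>)"
    using cSUP_upper[OF sets.empty_sets bdd] by (smt (verit))
  moreover have "(SUP A \<in> sets P. \<bar>measure P A - measure Q A\<bar>) \<le> measure P (space P) + measure Q (space Q)"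
    using b by (intro cSUP_least[OF ne]) auto
  ultimately show ?thesis unfolding tv_norm_def by simp
qed

lemma tv_lower:
  assumes P: "finite_measure P" and Q: "finite_measure Q" and A: "A \<in> sets P"
  shows "measure P A \<le> measure Q A + tv_norm P Q / 2"
proof -
  have b: "\<bar>measure P A - measure Q A\<bar> \<le> measure P (space P) + measure Q (space Q)" if "A \<in> sets P" for A
  proof -
    have "measure P A \<le> measure P (space P)" using that finite_measure.bounded_measure[OF P] by blast
    moreover have "measure Q A \<le> measure Q (space Q)"
    proof (cases "A \<in> sets Q")
      case True then show ?thesis using finite_measure.bounded_measure[OF Q] by blast
    next
      case False then show ?thesis by (simp add: measure_notin_sets)
    qed
    ultimately show ?thesis unfolding abs_le_iff using measure_nonneg[of P A] measure_nonneg[of Q A] by linarith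
  qed
  have bdd: "bdd_above ((\<lambda>A. \<bar>measure P A - measure Q A\<bar>) ` sets P)"
    using b by (intro bdd_aboveI2) 
  show ?thesis using cSUP_upper[OF A bdd] unfolding tv_norm_def by linarith
qed

lemma tv_upper:
  assumes P: "finite_measure P" and Q: "finite_measure Q" and eqs: "sets P = sets Q"
    and eqm: "measure P (space P) = measure Q (space Q)"
    and le: "\<And>A. A \<in> sets P \<Longrightarrow> measure P A \<le> measure Q A + d"
  shows "tv_norm P Q \<le> 2 * d"
proof -
  have sp: "space P = space Q" using eqs sets_eq_imp_space_eq by blast
  have "\<bar>measure P A - measure Q A\<bar> \<le> d" if A: "A \<in> sets P" for A
  proof -
    have A': "space P - A \<in> sets P" using A by auto
    have "measure P (space P - A) = measure P (space P) - measure P A"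
      using finite_measure.finite_measure_compl[OF P A] .
    moreover have "measure Q (space P - A) = measure Q (space Q) - measure Q A"
      using finite_measure.finite_measure_compl[OF Q] A eqs sp by auto
    ultimately show ?thesis using le[OF A] le[OF A'] eqm by (simp add: abs_le_iff)
  qed
  then have "(SUP A \<in> sets P. \<bar>measure P A - measure Q A\<bar>) \<le> d"
    by (intro cSUP_least) auto
  then show ?thesis unfolding tv_norm_def by simp
qed




definition shiftm :: "(real^'m) measure \<Rightarrow> real^'m \<Rightarrow> (real^'m) measure" where
  "shiftm P h = distr P borel (\<lambda>z. z + h)"

lemma markov_kernelsD:
  "K \<in> markov_kernels \<Longrightarrow> K \<in> borel \<rightarrow>\<^sub>M prob_algebra borel"
  by (simp add: markov_kernels_def)

lemma kernel_prob: "K \<in> markov_kernels \<Longrightarrow> prob_space (K x) \<and> sets (K x) = sets borel"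
  using measurable_space[OF markov_kernelsD, of K x] by (auto simp: space_prob_algebra)

lemma kernel_space: "K \<in> markov_kernels \<Longrightarrow> space (K x) = UNIV"
  using kernel_prob[of K x] sets_eq_imp_space_eq[of "K x" borel] by auto

locale P0loc =
  fixes P0 :: "(real^'m) measure"
  assumes finP: "finite_measure P0" and setsP: "sets P0 = sets borel"
begin

lemma spaceP: "space P0 = UNIV"
  using sets_eq_imp_space_eq[OF setsP] by simp

lemma meas_P [measurable_cong]: "sets P0 = sets borel" by (rule setsP)

lemma sets_shiftm[simp]: "sets (shiftm P0 h) = sets borel"
  by (simp add: shiftm_def)

lemma space_shiftm[simp]: "space (shiftm P0 h) = UNIV"
  by (simp add: shiftm_def)

lemma emeasure_shiftm:
  "A \<in> sets borel \<Longrightarrow> emeasure (shiftm P0 h) A = emeasure P0 ((\<lambda>z. z + h) -` A)"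
  unfolding shiftm_def by (subst emeasure_distr) (auto simp: spaceP)

lemma finite_shiftm: "finite_measure (shiftm P0 h)"
  unfolding shiftm_def
  by (rule finite_measure.finite_measure_distr[OF finP]) simp

lemma emeasure_shiftm_space: "emeasure (shiftm P0 h) UNIV = emeasure P0 UNIV"
  by (subst emeasure_shiftm) auto

lemma bind_props:
  assumes K: "K \<in> markov_kernels"
  shows "sets (shiftm P0 h \<bind> K) = sets borel"
    and "space (shiftm P0 h \<bind> K) = UNIV"
    and "\<And>A. A \<in> sets borel \<Longrightarrow> emeasure (shiftm P0 h \<bind> K) A = (\<integral>\<^sup>+z. emeasure (K (z + h)) A \<partial>P0)"
    and "emeasure (shiftm P0 h \<bind> K) UNIV = emeasure P0 UNIV"
    and "finite_measure (shiftm P0 h \<bind> K)"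
proof -
  have Km: "K \<in> shiftm P0 h \<rightarrow>\<^sub>M subprob_algebra borel"
    using measurable_prob_algebraD[OF markov_kernelsD[OF K]]
    by (simp cong: measurable_cong_sets)
  show s: "sets (shiftm P0 h \<bind> K) = sets borel"
    by (rule sets_bind_measurable[OF Km]) simp
  then show sp: "space (shiftm P0 h \<bind> K) = UNIV"
    using sets_eq_imp_space_eq by fastforce
  have em: "emeasure (shiftm P0 h \<bind> K) A = (\<integral>\<^sup>+z. emeasure (K (z + h)) A \<partial>P0)" if A: "A \<in> sets borel" for A
  proof -
    have "emeasure (shiftm P0 h \<bind> K) A = (\<integral>\<^sup>+x. emeasure (K x) A \<partial>shiftm P0 h)"
      by (rule emeasure_bind[OF _ Km A]) simp
    also have "\<dots> = (\<integral>\<^sup>+z. emeasure (K (z + h)) A \<partial>P0)"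
      unfolding shiftm_def
      by (rule nn_integral_distr) (auto intro: measurable_emeasure_kernel[OF measurable_prob_algebraD[OF markov_kernelsD[OF K]]] A)
    finally show ?thesis .
  qed
  then show "\<And>A. A \<in> sets borel \<Longrightarrow> emeasure (shiftm P0 h \<bind> K) A = (\<integral>\<^sup>+z. emeasure (K (z + h)) A \<partial>P0)" .
  have "emeasure (shiftm P0 h \<bind> K) UNIV = (\<integral>\<^sup>+z. 1 \<partial>P0)"
  proof -
    have "\<And>z. emeasure (K (z + h)) UNIV = 1"
      using kernel_prob[OF K] prob_space.emeasure_space_1 kernel_space[OF K] by metis
    then show ?thesis using em[of UNIV] by simp
  qed
  also have "\<dots> = emeasure P0 UNIV" using spaceP by simp
  finally show eu: "emeasure (shiftm P0 h \<bind> K) UNIV = emeasure P0 UNIV" .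
  show "finite_measure (shiftm P0 h \<bind> K)"
    by (rule finite_measureI) (use eu sp finite_measure.emeasure_finite[OF finP] spaceP in auto)
qed

end



lemma vimage_borel:
  "f \<in> borel_measurable borel \<Longrightarrow> A \<in> sets borel \<Longrightarrow> f -` A \<in> sets borel"
  using measurable_sets[of f borel borel A] by simp

lemma kernel_meas:
  assumes K: "K \<in> markov_kernels" and f: "f \<in> borel \<rightarrow>\<^sub>M N"
  shows "f \<in> K x \<rightarrow>\<^sub>M N"
  using f measurable_cong_sets[OF kernel_prob[OF K, of x, THEN conjunct2] refl, of N] by simp

lemma Hmeas:
  fixes s :: real and c :: "real^'m"
  assumes K: "K \<in> markov_kernels" and A: "A \<in> sets borel"
  shows "(\<lambda>p. emeasure (K (snd p)) ((\<lambda>y. y - s *\<^sub>R fst p + c) -` A)) \<in> borel_measurable (borel \<Otimes>\<^sub>M borel)"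
proof -
  note Km[measurable] = markov_kernelsD[OF K]
  define N where "N p = distr (K (snd p)) borel (\<lambda>y. y - s *\<^sub>R fst p + c)" for p :: "(real^'m) \<times> (real^'m)"
  have Nm: "N \<in> (borel \<Otimes>\<^sub>M borel) \<rightarrow>\<^sub>M prob_algebra borel"
    unfolding N_def
    by (rule measurable_distr_prob_space2) measurable
  have "(\<lambda>p. emeasure (N p) A) \<in> borel_measurable (borel \<Otimes>\<^sub>M borel)"
    using measurable_emeasure_kernel[OF measurable_prob_algebraD[OF Nm] A] .
  moreover have "emeasure (N p) A = emeasure (K (snd p)) ((\<lambda>y. y - s *\<^sub>R fst p + c) -` A)" for p
    unfolding N_def using A by (subst emeasure_distr) (auto simp: kernel_space[OF K] intro!: kernel_meas[OF K])
  ultimately show ?thesis by simp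
qed

context P0loc begin

definition Eb :: "real \<Rightarrow> ennreal" where
  "Eb b = (\<integral>\<^sup>+z. (\<integral>\<^sup>+w. indicator (cball 0 b) (z + w) * indicator (- cball 0 b) w \<partial>lborel)
             / emeasure lborel (cball (0::real^'m) b) \<partial>P0)"

lemma construct:
  fixes K s b M
  assumes K: "K \<in> markov_kernels" and b: "b > 0"
    and M: "\<And>w. w \<in> cball 0 b \<Longrightarrow> tv_norm (shiftm P0 w \<bind> K) (shiftm P0 (s *\<^sub>R w)) \<le> M"
  shows "\<exists>K'\<in>markov_kernels. \<forall>h. \<forall>A\<in>sets borel.
     emeasure (shiftm P0 h \<bind> K') A \<le> emeasure (shiftm P0 (s *\<^sub>R h)) A + ennreal (M / 2) + Eb b"
proof -
  note Km[measurable] = markov_kernelsD[OF K]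
  define B where "B = cball (0::real^'m) b"
  define V where "V = emeasure lborel B"
  have V: "V = ennreal (unit_ball_vol (real CARD('m)) * b ^ CARD('m))"
    unfolding V_def B_def using b by (subst emeasure_cball) auto
  have V0: "V \<noteq> 0" "V \<noteq> \<top>" proof -
    have "unit_ball_vol (real CARD('m)) > 0" by simp
    then have pos: "unit_ball_vol (real CARD('m)) * b ^ CARD('m) > 0" using b by simp
    show "V \<noteq> 0" unfolding V using pos ennreal_eq_0_iff by (metis not_le)
    show "V \<noteq> \<top>" unfolding V by simp
  qed
  have Bs[measurable]: "B \<in> sets borel" unfolding B_def by simp
  define U where "U = uniform_measure lborel B"
  have U: "U \<in> space (prob_algebra borel)"
    unfolding U_def space_prob_algebra
    using prob_space_uniform_measure[of lborel B] V0 by (auto simp: V_def)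
  define L where "L u = distr (K u) borel (\<lambda>y. y - s *\<^sub>R u)" for u
  have Lm[measurable]: "L \<in> borel \<rightarrow>\<^sub>M prob_algebra borel"
    unfolding L_def by (rule measurable_distr_prob_space2) measurable
  define \<nu> where "\<nu> = U \<bind> L"
  have \<nu>: "\<nu> \<in> space (prob_algebra borel)"
    unfolding space_prob_algebra \<nu>_def using sets_bind'[OF U Lm] prob_space_bind'[OF U Lm] by auto
  have sets\<nu>: "sets \<nu> = sets borel" using \<nu> by (auto simp: space_prob_algebra)
  have m\<nu>: "f \<in> borel \<rightarrow>\<^sub>M N \<Longrightarrow> f \<in> \<nu> \<rightarrow>\<^sub>M N" for f and N :: "'b measure"
    using measurable_cong_sets[OF sets\<nu> refl, of N] by simp
  have sp\<nu>: "space \<nu> = UNIV"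
    using \<nu> sets_eq_imp_space_eq[of \<nu> borel] by (auto simp: space_prob_algebra)
  define K' where "K' x = distr \<nu> borel (\<lambda>y. y + s *\<^sub>R x)" for x
  have K'm: "K' \<in> markov_kernels"
    unfolding markov_kernels_def K'_def mem_Collect_eq
    by (rule measurable_distr_prob_space2[OF measurable_const[OF \<nu>]]) measurable
  show ?thesis
  proof (intro bexI[OF _ K'm] allI ballI)
    fix h :: "real^'m" and A :: "(real^'m) set"
    assume A[measurable]: "A \<in> sets borel"
    define H where "H w x = emeasure (K x) ((\<lambda>y. y - s *\<^sub>R w + s *\<^sub>R h) -` A)" for w x
    have H1: "H w x \<le> 1" for w x
      unfolding H_def using kernel_prob[OF K, of x] prob_space.measure_le_1 
      by (metis prob_space.emeasure_le_1)
    have Hm: "(\<lambda>p. H (fst p) (snd p)) \<in> borel_measurable (borel \<Otimes>\<^sub>M borel)"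
      unfolding H_def using Hmeas[OF K A, of s "s *\<^sub>R h"] by simp
    have K'eq: "emeasure (K' x) A = (\<integral>\<^sup>+u. emeasure (K u) ((\<lambda>y. y - s *\<^sub>R u + s *\<^sub>R x) -` A) * indicator B u \<partial>lborel) / V" for x
    proof -
      have "emeasure (K' x) A = emeasure \<nu> ((\<lambda>y. y + s *\<^sub>R x) -` A)"
        unfolding K'_def by (subst emeasure_distr) (auto simp: sp\<nu> intro!: m\<nu>)
      also have "\<dots> = (\<integral>\<^sup>+u. emeasure (L u) ((\<lambda>y. y + s *\<^sub>R x) -` A) \<partial>U)"
        unfolding \<nu>_def by (rule emeasure_bind_prob_algebra[OF U Lm]) (rule vimage_borel, measurable)
      also have "\<dots> = (\<integral>\<^sup>+u. emeasure (L u) ((\<lambda>y. y + s *\<^sub>R x) -` A) * indicator B u \<partial>lborel) / V"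
        unfolding U_def V_def
        by (rule nn_integral_uniform_measure) (auto intro!: measurable_emeasure_kernel[OF measurable_prob_algebraD[OF Lm]] vimage_borel)
      also have "\<dots> = (\<integral>\<^sup>+u. emeasure (K u) ((\<lambda>y. y - s *\<^sub>R u + s *\<^sub>R x) -` A) * indicator B u \<partial>lborel) / V"
      proof -
        have "emeasure (L u) ((\<lambda>y. y + s *\<^sub>R x) -` A) = emeasure (K u) ((\<lambda>y. y - s *\<^sub>R u + s *\<^sub>R x) -` A)" for u
          unfolding L_def by (subst emeasure_distr) (auto simp: kernel_space[OF K] vimage_def intro!: kernel_meas[OF K])
        then show ?thesis by simp
      qed
      finally show ?thesis .
    qed
    have setsPL: "sets (P0 \<Otimes>\<^sub>M lborel) = sets (borel \<Otimes>\<^sub>M borel)"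
      by (rule sets_pair_measure_cong) (simp_all add: setsP)
    have setsBL: "sets (borel \<Otimes>\<^sub>M lborel) = sets (borel \<Otimes>\<^sub>M (borel :: (real^'m) measure))"
      by (rule sets_pair_measure_cong) simp_all
    have mapm: "(\<lambda>p::(real^'m)\<times>(real^'m). (snd p, fst p + snd p)) \<in> (borel \<Otimes>\<^sub>M borel) \<rightarrow>\<^sub>M (borel \<Otimes>\<^sub>M borel)"
      by measurable
    have Hm2: "(\<lambda>p. H (snd p) (fst p + snd p)) \<in> borel_measurable (borel \<Otimes>\<^sub>M borel)"
      using measurable_compose[OF mapm Hm] by simp
    have indm1: "(\<lambda>p::(real^'m)\<times>(real^'m). indicator B (snd p) :: ennreal) \<in> borel_measurable (borel \<Otimes>\<^sub>M borel)"
      by measurable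
    have indm2: "(\<lambda>p::(real^'m)\<times>(real^'m). indicator B (fst p + snd p) :: ennreal) \<in> borel_measurable (borel \<Otimes>\<^sub>M borel)"
      by measurable
    have indm3: "(\<lambda>p::(real^'m)\<times>(real^'m). indicator (- B) (snd p) :: ennreal) \<in> borel_measurable (borel \<Otimes>\<^sub>M borel)"
      by measurable
    define F0 where "F0 p = H (snd p) (fst p + snd p) * indicator B (fst p + snd p)" for p :: "(real^'m)\<times>(real^'m)"
    define F1 where "F1 p = H (snd p) (fst p + snd p) * indicator B (snd p)" for p :: "(real^'m)\<times>(real^'m)"
    define F2 where "F2 p = (indicator B (fst p + snd p) * indicator (- B) (snd p) :: ennreal)" for p :: "(real^'m)\<times>(real^'m)"
    have F0m: "F0 \<in> borel_measurable (borel \<Otimes>\<^sub>M borel)"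
      unfolding F0_def by (intro borel_measurable_times_ennreal Hm2 indm2)
    have F1m: "F1 \<in> borel_measurable (borel \<Otimes>\<^sub>M borel)"
      unfolding F1_def by (intro borel_measurable_times_ennreal Hm2 indm1)
    have F2m: "F2 \<in> borel_measurable (borel \<Otimes>\<^sub>M borel)"
      unfolding F2_def by (intro borel_measurable_times_ennreal indm2 indm3)
    have sec: "(\<lambda>w. F (z, w)) \<in> borel_measurable borel" if "F \<in> borel_measurable (borel \<Otimes>\<^sub>M borel)" for F z
      using measurable_Pair2[OF that, of z] by simp
    have intm: "(\<lambda>z. \<integral>\<^sup>+w. F (z, w) \<partial>lborel) \<in> borel_measurable P0" if "F \<in> borel_measurable (borel \<Otimes>\<^sub>M borel)" for F
    proof -
      have "F \<in> borel_measurable (borel \<Otimes>\<^sub>M lborel)"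
        using that measurable_cong_sets[OF setsBL refl] by simp
      from lborel.borel_measurable_nn_integral_fst[OF this]
      show ?thesis using measurable_cong_sets[OF setsP refl] by simp
    qed
    have eq2: "emeasure (shiftm P0 h \<bind> K') A = (\<integral>\<^sup>+z. (\<integral>\<^sup>+w. F0 (z, w) \<partial>lborel) / V \<partial>P0)"
    proof -
      have "emeasure (shiftm P0 h \<bind> K') A = (\<integral>\<^sup>+z. emeasure (K' (z + h)) A \<partial>P0)"
        using bind_props(3)[OF K'm A] .
      also have "\<dots> = (\<integral>\<^sup>+z. (\<integral>\<^sup>+w. F0 (z, w) \<partial>lborel) / V \<partial>P0)"
      proof (rule nn_integral_cong)
        fix z :: "real^'m"
        define C where "C = (\<lambda>y. y + s *\<^sub>R (z + h)) -` A"
        have C: "C \<in> sets borel" unfolding C_def by (rule vimage_borel[OF _ A]) measurable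
        define G where "G u = emeasure (L u) C * indicator B u" for u
        have Gm: "G \<in> borel_measurable borel"
          unfolding G_def
          by (intro borel_measurable_times_ennreal measurable_emeasure_kernel[OF measurable_prob_algebraD[OF Lm] C]) measurable
        have "emeasure (K' (z + h)) A = (\<integral>\<^sup>+u. G u \<partial>lborel) / V"
          unfolding G_def C_def
        proof -
          have "emeasure (K' (z + h)) A = emeasure \<nu> ((\<lambda>y. y + s *\<^sub>R (z + h)) -` A)"
            unfolding K'_def by (subst emeasure_distr) (auto simp: sp\<nu> intro!: m\<nu>)
          also have "\<dots> = (\<integral>\<^sup>+u. emeasure (L u) ((\<lambda>y. y + s *\<^sub>R (z + h)) -` A) \<partial>U)"
            unfolding \<nu>_def by (rule emeasure_bind_prob_algebra[OF U Lm]) (rule vimage_borel, measurable)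
          also have "\<dots> = (\<integral>\<^sup>+u. emeasure (L u) ((\<lambda>y. y + s *\<^sub>R (z + h)) -` A) * indicator B u \<partial>lborel) / V"
            unfolding U_def V_def
            by (rule nn_integral_uniform_measure) (auto intro!: measurable_emeasure_kernel[OF measurable_prob_algebraD[OF Lm]] vimage_borel)
          finally show "emeasure (K' (z + h)) A = (\<integral>\<^sup>+u. emeasure (L u) ((\<lambda>y. y + s *\<^sub>R (z + h)) -` A) * indicator B u \<partial>lborel) / V" .
        qed
        also have "(\<integral>\<^sup>+u. G u \<partial>lborel) = (\<integral>\<^sup>+u. G u \<partial>(distr lborel borel ((+) z)))"
          by (simp add: lborel_distr_plus)
        also have "\<dots> = (\<integral>\<^sup>+w. G (z + w) \<partial>lborel)"
          by (rule nn_integral_distr) (simp_all add: Gm)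
        also have "\<dots> = (\<integral>\<^sup>+w. F0 (z, w) \<partial>lborel)"
        proof (rule nn_integral_cong)
          fix w :: "real^'m"
          have "(\<lambda>y. y - s *\<^sub>R (z + w)) -` C = (\<lambda>y. y - s *\<^sub>R w + s *\<^sub>R h) -` A"
            unfolding C_def by (auto simp: algebra_simps)
          then show "G (z + w) = F0 (z, w)"
            unfolding G_def F0_def H_def L_def
            by (subst emeasure_distr) (auto simp: kernel_space[OF K] C intro!: kernel_meas[OF K])
        qed
        finally show "emeasure (K' (z + h)) A = (\<integral>\<^sup>+w. F0 (z, w) \<partial>lborel) / V" .
      qed
      finally show ?thesis .
    qed
    have pw: "F0 p \<le> F1 p + F2 p" for p
      unfolding F0_def F1_def F2_def using H1[of "snd p" "fst p + snd p"]
      by (cases "snd p \<in> B"; cases "fst p + snd p \<in> B") auto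
    have step5: "(\<integral>\<^sup>+w. F0 (z, w) \<partial>lborel) \<le> (\<integral>\<^sup>+w. F1 (z, w) \<partial>lborel) + (\<integral>\<^sup>+w. F2 (z, w) \<partial>lborel)" for z
    proof -
      have "(\<integral>\<^sup>+w. F0 (z, w) \<partial>lborel) \<le> (\<integral>\<^sup>+w. F1 (z, w) + F2 (z, w) \<partial>lborel)"
        by (rule nn_integral_mono) (rule pw)
      also have "\<dots> = (\<integral>\<^sup>+w. F1 (z, w) \<partial>lborel) + (\<integral>\<^sup>+w. F2 (z, w) \<partial>lborel)"
        by (rule nn_integral_add) (auto intro!: sec F1m F2m)
      finally show ?thesis .
    qed
    have step5b: "emeasure (shiftm P0 h \<bind> K') A \<le>
        (\<integral>\<^sup>+z. (\<integral>\<^sup>+w. F1 (z, w) \<partial>lborel) / V \<partial>P0) + (\<integral>\<^sup>+z. (\<integral>\<^sup>+w. F2 (z, w) \<partial>lborel) / V \<partial>P0)"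
    proof -
      have "emeasure (shiftm P0 h \<bind> K') A \<le> (\<integral>\<^sup>+z. (\<integral>\<^sup>+w. F1 (z, w) \<partial>lborel) / V + (\<integral>\<^sup>+w. F2 (z, w) \<partial>lborel) / V \<partial>P0)"
        unfolding eq2
        by (rule nn_integral_mono) (metis add_divide_distrib_ennreal divide_right_mono_ennreal step5)
      also have "\<dots> = (\<integral>\<^sup>+z. (\<integral>\<^sup>+w. F1 (z, w) \<partial>lborel) / V \<partial>P0) + (\<integral>\<^sup>+z. (\<integral>\<^sup>+w. F2 (z, w) \<partial>lborel) / V \<partial>P0)"
        by (rule nn_integral_add) (auto intro!: borel_measurable_divide_ennreal intm F1m F2m)
      finally show ?thesis .
    qed
    have t2: "(\<integral>\<^sup>+z. (\<integral>\<^sup>+w. F2 (z, w) \<partial>lborel) / V \<partial>P0) = Eb b"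
      unfolding Eb_def F2_def B_def V_def by simp
    have M0: "M \<ge> 0"
    proof -
      have "0 \<le> tv_norm (shiftm P0 0 \<bind> K) (shiftm P0 (s *\<^sub>R 0))"
        using tv_nonneg_bound[OF bind_props(5)[OF K] finite_shiftm] by blast
      also have "\<dots> \<le> M" using M[of 0] b by simp
      finally show ?thesis .
    qed
    define Qs where "Qs = emeasure (shiftm P0 (s *\<^sub>R h)) A"
    define Aw where "Aw w = (\<lambda>y. y - s *\<^sub>R w + s *\<^sub>R h) -` A" for w
    have Aw: "Aw w \<in> sets borel" for w unfolding Aw_def by (rule vimage_borel[OF _ A]) measurable
    have bw: "emeasure (shiftm P0 w \<bind> K) (Aw w) \<le> Qs + ennreal (M / 2)" if w: "w \<in> B" for w
    proof -
      let ?P = "shiftm P0 w \<bind> K" and ?Q = "shiftm P0 (s *\<^sub>R w)"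
      have fP: "finite_measure ?P" by (rule bind_props(5)[OF K])
      have fQ: "finite_measure ?Q" by (rule finite_shiftm)
      have AwP: "Aw w \<in> sets ?P" using Aw bind_props(1)[OF K] by simp
      have "measure ?P (Aw w) \<le> measure ?Q (Aw w) + tv_norm ?P ?Q / 2"
        by (rule tv_lower[OF fP fQ AwP])
      also have "tv_norm ?P ?Q \<le> M" using M w unfolding B_def by blast
      finally have le: "measure ?P (Aw w) \<le> measure ?Q (Aw w) + M / 2" by simp
      have "emeasure ?Q (Aw w) = emeasure P0 ((\<lambda>z. z + s *\<^sub>R w) -` Aw w)"
        by (rule emeasure_shiftm[OF Aw])
      also have "(\<lambda>z. z + s *\<^sub>R w) -` Aw w = (\<lambda>z. z + s *\<^sub>R h) -` A"
        unfolding Aw_def by (auto simp: algebra_simps)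
      also have "emeasure P0 \<dots> = Qs"
        unfolding Qs_def by (rule emeasure_shiftm[OF A, symmetric])
      finally have eqQ: "emeasure ?Q (Aw w) = Qs" .
      have "emeasure ?P (Aw w) = ennreal (measure ?P (Aw w))"
        using finite_measure.emeasure_eq_measure[OF fP] by blast
      also have "\<dots> \<le> ennreal (measure ?Q (Aw w) + M / 2)"
        using le by (rule ennreal_leI)
      also have "\<dots> = ennreal (measure ?Q (Aw w)) + ennreal (M / 2)"
        using M0 by (simp add: measure_nonneg)
      also have "ennreal (measure ?Q (Aw w)) = Qs"
        using eqQ finite_measure.emeasure_eq_measure[OF fQ] by metis
      finally show ?thesis .
    qed
    have inner: "(\<integral>\<^sup>+z. F1 (z, w) \<partial>P0) = emeasure (shiftm P0 w \<bind> K) (Aw w) * indicator B w" for w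
    proof -
      have m1: "(\<lambda>z. H w (z + w)) \<in> borel_measurable P0"
        using measurable_Pair1[OF Hm2, of w] measurable_cong_sets[OF setsP refl] by simp
      have "(\<integral>\<^sup>+z. F1 (z, w) \<partial>P0) = (\<integral>\<^sup>+z. H w (z + w) \<partial>P0) * indicator B w"
        unfolding F1_def by (simp add: nn_integral_multc[OF m1])
      also have "(\<integral>\<^sup>+z. H w (z + w) \<partial>P0) = emeasure (shiftm P0 w \<bind> K) (Aw w)"
        unfolding H_def Aw_def using bind_props(3)[OF K Aw[of w, unfolded Aw_def], of w] by (simp add: add.commute)
      finally show ?thesis .
    qed
    have t1: "(\<integral>\<^sup>+z. (\<integral>\<^sup>+w. F1 (z, w) \<partial>lborel) / V \<partial>P0) \<le> Qs + ennreal (M / 2)"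
    proof -
      interpret Pf: finite_measure P0 by (rule finP)
      interpret PS: pair_sigma_finite P0 lborel
        by (simp add: pair_sigma_finite_def Pf.sigma_finite_measure_axioms lborel.sigma_finite_measure_axioms)
      have F1PL: "(\<lambda>(z, w). F1 (z, w)) \<in> borel_measurable (P0 \<Otimes>\<^sub>M lborel)"
        using F1m measurable_cong_sets[OF setsPL refl] by simp
      have eq1: "(\<integral>\<^sup>+z. (\<integral>\<^sup>+w. F1 (z, w) \<partial>lborel) / V \<partial>P0) = (\<integral>\<^sup>+z. (\<integral>\<^sup>+w. F1 (z, w) \<partial>lborel) \<partial>P0) / V"
        by (rule nn_integral_divide[OF intm[OF F1m]])
      have "(\<integral>\<^sup>+z. (\<integral>\<^sup>+w. F1 (z, w) \<partial>lborel) \<partial>P0) = (\<integral>\<^sup>+w. (\<integral>\<^sup>+z. F1 (z, w) \<partial>P0) \<partial>lborel)"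
        using PS.Fubini'[OF F1PL] by simp
      also have "\<dots> \<le> (\<integral>\<^sup>+w. (Qs + ennreal (M / 2)) * indicator B w \<partial>lborel)"
        unfolding inner
        by (rule nn_integral_mono) (auto simp: bw split: split_indicator)
      also have "\<dots> = (Qs + ennreal (M / 2)) * V"
        unfolding V_def by (rule nn_integral_cmult_indicator) simp
      finally have Xle: "(\<integral>\<^sup>+z. (\<integral>\<^sup>+w. F1 (z, w) \<partial>lborel) \<partial>P0) \<le> (Qs + ennreal (M / 2)) * V" .
      have "(\<integral>\<^sup>+z. (\<integral>\<^sup>+w. F1 (z, w) \<partial>lborel) / V \<partial>P0) \<le> ((Qs + ennreal (M / 2)) * V) / V"
        unfolding eq1 by (rule divide_right_mono_ennreal[OF Xle])
      also have "\<dots> = Qs + ennreal (M / 2)"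
        using V0 by (rule ennreal_mult_divide_eq)
      finally show ?thesis .
    qed
    show "emeasure (shiftm P0 h \<bind> K') A \<le> emeasure (shiftm P0 (s *\<^sub>R h)) A + ennreal (M / 2) + Eb b"
    proof -
      note step5b
      also have "(\<integral>\<^sup>+z. (\<integral>\<^sup>+w. F1 (z, w) \<partial>lborel) / V \<partial>P0) + (\<integral>\<^sup>+z. (\<integral>\<^sup>+w. F2 (z, w) \<partial>lborel) / V \<partial>P0)
          \<le> (Qs + ennreal (M / 2)) + Eb b"
        using t1 t2 by (intro add_mono) auto
      finally show ?thesis unfolding Qs_def .
    qed
  qed
qed

end



lemma e_le1:
  fixes z :: "real^'m" and b :: real
  assumes b: "b > 0"
  shows "(\<integral>\<^sup>+w. indicator (cball 0 b) (z + w) * indicator (- cball 0 b) w \<partial>lborel) / emeasure lborel (cball (0::real^'m) b) \<le> 1"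
proof -
  define B where "B = cball (0::real^'m) b"
  have V: "emeasure lborel B = ennreal (unit_ball_vol (real CARD('m)) * b ^ CARD('m))"
    unfolding B_def using b by (subst emeasure_cball) auto
  have pos: "unit_ball_vol (real CARD('m)) * b ^ CARD('m) > 0" using b by simp
  have "(\<integral>\<^sup>+w. indicator B (z + w) * indicator (- B) w \<partial>lborel) \<le> (\<integral>\<^sup>+w. indicator B (z + w) \<partial>lborel)"
    by (rule nn_integral_mono) (auto simp: indicator_def)
  also have "\<dots> = (\<integral>\<^sup>+w. indicator B w \<partial>distr lborel borel ((+) z))"
    by (subst nn_integral_distr) (auto simp: B_def intro!: borel_measurable_indicator)
  also have "\<dots> = emeasure lborel B"
    by (simp add: lborel_distr_plus B_def)
  finally have "(\<integral>\<^sup>+w. indicator B (z + w) * indicator (- B) w \<partial>lborel) / emeasure lborel B \<le> emeasure lborel B / emeasure lborel B"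
    by (rule divide_right_mono_ennreal)
  also have "\<dots> = 1"
  proof -
    have ne: "unit_ball_vol (real CARD('m)) * b ^ CARD('m) \<noteq> 0" using pos by linarith
    show ?thesis unfolding V using divide_ennreal[OF less_imp_le[OF pos] pos] ne by simp
  qed
  finally show ?thesis unfolding B_def .
qed

lemma e_bound:
  fixes z :: "real^'m" and b :: real
  assumes b: "b > 0" and z: "norm z \<le> 2 * b"
  shows "(\<integral>\<^sup>+w. indicator (cball 0 b) (z + w) * indicator (- cball 0 b) w \<partial>lborel) / emeasure lborel (cball (0::real^'m) b)
     \<le> ennreal (real CARD('m) * norm z / (2 * b))"
proof -
  define B where "B = cball (0::real^'m) b"
  define T where "T = cball (-z) b"
  define c where "c = b - norm z / 2"
  define Cz where "Cz = cball (- ((1/2) *\<^sub>R z)) c"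
  define u where "u = unit_ball_vol (real CARD('m))"
  define m where "m = CARD('m)"
  have u: "u > 0" unfolding u_def by simp
  have c0: "0 \<le> c" "c \<le> b" using z b unfolding c_def by auto
  have Tmem: "w \<in> T \<longleftrightarrow> z + w \<in> B" for w
  proof -
    have "- z - w = - (z + w)" by simp
    then have "norm (- z - w) = norm (z + w)" by (metis norm_minus_cancel)
    then show ?thesis unfolding T_def B_def by (simp add: dist_norm)
  qed
  have CzB: "Cz \<subseteq> B"
  proof
    fix w assume "w \<in> Cz"
    then have "norm (w + (1/2) *\<^sub>R z) \<le> c" unfolding Cz_def
      by (simp add: dist_norm norm_minus_commute add.commute)
    moreover have "norm w \<le> norm (w + (1/2) *\<^sub>R z) + norm ((1/2) *\<^sub>R z)"
      using norm_triangle_ineq4[of "w + (1/2) *\<^sub>R z" "(1/2) *\<^sub>R z"] by simp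
    ultimately show "w \<in> B" unfolding B_def c_def by auto
  qed
  have CzT: "Cz \<subseteq> T"
  proof
    fix w assume "w \<in> Cz"
    then have "norm (w + (1/2) *\<^sub>R z) \<le> c" unfolding Cz_def
      by (simp add: dist_norm norm_minus_commute add.commute)
    moreover have "norm (z + w) \<le> norm (w + (1/2) *\<^sub>R z) + norm ((1/2) *\<^sub>R z)"
    proof -
      have "z + w = (w + (1/2) *\<^sub>R z) + (1/2) *\<^sub>R z" by (simp add: algebra_simps scaleR_2[symmetric] flip: scaleR_add_left)
      then show ?thesis by (metis norm_triangle_ineq)
    qed
    ultimately show "w \<in> T" using Tmem unfolding B_def c_def by auto
  qed
  have ind: "indicator B (z + w) * indicator (- B) w = (indicator (T - B) w :: ennreal)" for w
    using Tmem[of w] by (auto simp: indicator_def)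
  have int: "(\<integral>\<^sup>+w. indicator B (z + w) * indicator (- B) w \<partial>lborel) = emeasure lborel (T - B)"
    unfolding ind by (subst nn_integral_indicator) (auto simp: T_def B_def)
  have V: "emeasure lborel B = ennreal (u * b ^ m)"
    unfolding B_def u_def m_def using b by (subst emeasure_cball) auto
  have VT: "emeasure lborel T = ennreal (u * b ^ m)"
    unfolding T_def u_def m_def using b by (subst emeasure_cball) auto
  have VC: "emeasure lborel Cz = ennreal (u * c ^ m)"
    unfolding Cz_def u_def m_def using c0 by (subst emeasure_cball) auto
  have pos: "u * b ^ m > 0" using u b by simp
  have "emeasure lborel (T - B) \<le> emeasure lborel (T - Cz)"
    by (rule emeasure_mono) (use CzB in \<open>auto simp: T_def Cz_def\<close>)
  also have "\<dots> = emeasure lborel T - emeasure lborel Cz"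
    by (rule emeasure_Diff) (use CzT VC in \<open>auto simp: T_def Cz_def\<close>)
  also have "\<dots> = ennreal (u * b ^ m - u * c ^ m)"
    unfolding VT VC using u c0 by (simp add: ennreal_minus)
  finally have num: "emeasure lborel (T - B) \<le> ennreal (u * b ^ m - u * c ^ m)" .
  have cm: "c ^ m \<le> b ^ m" using c0 by (simp add: power_mono)
  have "(\<integral>\<^sup>+w. indicator B (z + w) * indicator (- B) w \<partial>lborel) / emeasure lborel B
     \<le> ennreal (u * b ^ m - u * c ^ m) / ennreal (u * b ^ m)"
    unfolding int V by (rule divide_right_mono_ennreal[OF num])
  also have "\<dots> = ennreal ((u * b ^ m - u * c ^ m) / (u * b ^ m))"
    using pos cm u by (intro divide_ennreal) (auto simp: mult_left_mono)
  also have eqr: "(u * b ^ m - u * c ^ m) / (u * b ^ m) = 1 - (c / b) ^ m"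
    using pos u b by (simp add: field_simps power_divide)
  finally have main: "(\<integral>\<^sup>+w. indicator B (z + w) * indicator (- B) w \<partial>lborel) / emeasure lborel B
     \<le> ennreal (1 - (c / b) ^ m)" .
  have "1 + real m * (- (norm z / (2 * b))) \<le> (1 + (- (norm z / (2 * b)))) ^ m"
    by (rule Bernoulli_inequality) (use z b in \<open>simp add: field_simps\<close>)
  moreover have "1 + (- (norm z / (2 * b))) = c / b" unfolding c_def using b by (simp add: field_simps)
  ultimately have "1 - (c / b) ^ m \<le> real m * norm z / (2 * b)" by simp
  then show ?thesis
    using main unfolding B_def m_def by (meson ennreal_leI order_trans)
qed


context P0loc begin

lemma Eb_small:
  assumes eps: "\<epsilon> > 0"
  shows "\<exists>b>0. Eb b \<le> ennreal \<epsilon>"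
proof -
  interpret Pf: finite_measure P0 by (rule finP)
  define cP where "cP = measure P0 UNIV"
  have cP0: "cP \<ge> 0" unfolding cP_def by simp
  define A where "A n = - cball (0::real^'m) (real n)" for n
  have Asets: "range A \<subseteq> sets P0" unfolding A_def setsP by auto
  have Adec: "decseq A" unfolding A_def decseq_def by (auto simp: subset_eq)
  have Aint: "(\<Inter>i. A i) = {}"
  proof -
    have "x \<notin> A (nat \<lceil>norm x\<rceil>)" for x unfolding A_def by (simp add: real_nat_ceiling_ge)
    then show ?thesis by blast
  qed
  have "(\<lambda>n. measure P0 (A n)) \<longlonglongrightarrow> 0"
    using Pf.finite_Lim_measure_decseq[OF Asets Adec] Aint by simp
  then have "\<forall>\<^sub>F n in sequentially. measure P0 (A n) < \<epsilon> / 2"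
    using eps by (intro order_tendstoD) auto
  then obtain N where N: "measure P0 (A N) < \<epsilon> / 2" using eventually_sequentially by auto
  define R where "R = real N"
  define m where "m = real CARD('m)"
  define b where "b = m * R * cP / \<epsilon> + R + 1"
  have R0: "R \<ge> 0" unfolding R_def by simp
  have m0: "m \<ge> 0" unfolding m_def by simp
  have b0: "b > 0" and bR: "b \<ge> R" unfolding b_def using R0 m0 cP0 eps by (auto intro!: add_nonneg_pos)
  define \<delta> where "\<delta> = m * R / (2 * b)"
  have \<delta>0: "\<delta> \<ge> 0" unfolding \<delta>_def using m0 R0 b0 by simp
  have \<delta>c: "\<delta> * cP \<le> \<epsilon> / 2"
  proof -
    have "m * R * cP \<le> \<epsilon> * b"
    proof -
      have "m * R * cP / \<epsilon> \<le> b" unfolding b_def using R0 by simp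
      then show ?thesis using eps by (simp add: field_simps)
    qed
    then show ?thesis unfolding \<delta>_def using b0 eps by (simp add: field_simps)
  qed
  define e where "e z = (\<integral>\<^sup>+w. indicator (cball 0 b) (z + w) * indicator (- cball 0 b) w \<partial>lborel) / emeasure lborel (cball (0::real^'m) b)" for z :: "real^'m"
  have ez: "e z \<le> indicator (A N) z + ennreal \<delta>" for z :: "real^'m"
  proof (cases "z \<in> A N")
    case True
    then show ?thesis using e_le1[OF b0, of z] unfolding e_def by (simp add: add_increasing2)
  next
    case False
    then have nz: "norm z \<le> R" unfolding A_def R_def by simp
    have "e z \<le> ennreal (m * norm z / (2 * b))"
      unfolding e_def m_def by (rule e_bound[OF b0]) (use nz bR b0 in simp)
    also have "\<dots> \<le> ennreal \<delta>"
      unfolding \<delta>_def using nz m0 b0 by (intro ennreal_leI divide_right_mono mult_left_mono) auto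
    finally show ?thesis using False by simp
  qed
  have "Eb b = (\<integral>\<^sup>+z. e z \<partial>P0)" unfolding Eb_def e_def ..
  also have "\<dots> \<le> (\<integral>\<^sup>+z. indicator (A N) z + ennreal \<delta> \<partial>P0)"
    by (rule nn_integral_mono) (rule ez)
  also have "\<dots> = emeasure P0 (A N) + ennreal \<delta> * emeasure P0 (space P0)"
    using Asets by (subst nn_integral_add) (auto)
  also have "\<dots> = ennreal (measure P0 (A N) + \<delta> * cP)"
    using \<delta>0 cP0 by (simp add: Pf.emeasure_eq_measure cP_def spaceP ennreal_mult)
  also have "\<dots> \<le> ennreal \<epsilon>"
    using N \<delta>c by (intro ennreal_leI) simp
  finally show ?thesis using b0 by blast
qed

end


context P0loc begin

lemma return_mk: "return borel \<in> markov_kernels"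
  unfolding markov_kernels_def by simp

lemma T_bounds:
  assumes K: "K \<in> markov_kernels"
  shows "0 \<le> tv_norm (shiftm P0 h \<bind> K) (shiftm P0 h')
     \<and> tv_norm (shiftm P0 h \<bind> K) (shiftm P0 h') \<le> 4 * measure P0 UNIV"
proof -
  have "measure (shiftm P0 h \<bind> K) (space (shiftm P0 h \<bind> K)) = measure P0 UNIV"
    using bind_props(2,4)[OF K] by (simp add: measure_def)
  moreover have "measure (shiftm P0 h') (space (shiftm P0 h')) = measure P0 UNIV"
    using emeasure_shiftm_space by (simp add: measure_def)
  ultimately show ?thesis
    using tv_nonneg_bound[OF bind_props(5)[OF K] finite_shiftm, of h h'] by simp
qed

lemma assemble:
  fixes s :: real
  defines "Db \<equiv> \<lambda>a. INF K\<in>markov_kernels. SUP h\<in>{h :: real^'m. norm h \<le> a}. tv_norm (shiftm P0 h \<bind> K) (shiftm P0 (s *\<^sub>R h))"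
  defines "Df \<equiv> INF K\<in>markov_kernels. SUP h\<in>(UNIV :: (real^'m) set). tv_norm (shiftm P0 h \<bind> K) (shiftm P0 (s *\<^sub>R h))"
  shows "mono_on {0..} Db \<and> (Db \<longlongrightarrow> Df) at_top"
proof -
  define T where "T K h = tv_norm (shiftm P0 h \<bind> K) (shiftm P0 (s *\<^sub>R h))" for K h
  define Bd where "Bd = 4 * measure P0 UNIV"
  have Tb: "K \<in> markov_kernels \<Longrightarrow> 0 \<le> T K h \<and> T K h \<le> Bd" for K h
    unfolding T_def Bd_def using T_bounds by blast
  define S where "S K X = (SUP h\<in>X. T K h)" for K X
  have bddT: "K \<in> markov_kernels \<Longrightarrow> bdd_above (T K ` X)" for K X
    using Tb by (intro bdd_aboveI2) blast
  have S_ge: "K \<in> markov_kernels \<Longrightarrow> h \<in> X \<Longrightarrow> T K h \<le> S K X" for K X h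
    unfolding S_def by (rule cSUP_upper[OF _ bddT])
  have S_mono: "K \<in> markov_kernels \<Longrightarrow> X \<noteq> {} \<Longrightarrow> X \<subseteq> Y \<Longrightarrow> S K X \<le> S K Y" for K X Y
    unfolding S_def by (rule cSUP_subset_mono[OF _ bddT]) auto
  have S_nonneg: "K \<in> markov_kernels \<Longrightarrow> X \<noteq> {} \<Longrightarrow> 0 \<le> S K X" for K X
  proof -
    assume K: "K \<in> markov_kernels" and X: "X \<noteq> {}"
    then obtain h where "h \<in> X" by blast
    then show ?thesis using S_ge[OF K, of h X] Tb[OF K, of h] by linarith
  qed
  have MKne: "markov_kernels \<noteq> {}" using return_mk by blast
  let ?Bl = "\<lambda>a. {h :: real^'m. norm h \<le> a}"
  have Blne: "a \<ge> 0 \<Longrightarrow> ?Bl a \<noteq> {}" for a by (auto intro!: exI[of _ 0])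
  have Db_eq: "Db a = (INF K\<in>markov_kernels. S K (?Bl a))" for a unfolding Db_def S_def T_def ..
  have Df_eq: "Df = (INF K\<in>markov_kernels. S K UNIV)" unfolding Df_def S_def T_def ..
  have bddbelow: "X \<noteq> {} \<Longrightarrow> bdd_below ((\<lambda>K. S K X) ` markov_kernels)" for X
    using S_nonneg by (intro bdd_belowI2) blast
  have Db_le: "0 \<le> a \<Longrightarrow> Db a \<le> S K Y" if "K \<in> markov_kernels" "?Bl a \<subseteq> Y" for a K Y
  proof -
    assume a: "0 \<le> a"
    have "Db a \<le> S K (?Bl a)" unfolding Db_eq by (rule cINF_lower[OF bddbelow[OF Blne[OF a]] that(1)])
    also have "\<dots> \<le> S K Y" by (rule S_mono[OF that(1) Blne[OF a] that(2)])
    finally show ?thesis .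
  qed
  have mono: "Db a \<le> Db a'" if "0 \<le> a" "a \<le> a'" for a a'
  proof -
    have "Db a \<le> (INF K\<in>markov_kernels. S K (?Bl a'))"
      by (rule cINF_greatest[OF MKne]) (rule Db_le, use that in auto)
    then show ?thesis unfolding Db_eq .
  qed
  have Db_Df: "Db a \<le> Df" if "0 \<le> a" for a
    unfolding Df_eq by (rule cINF_greatest[OF MKne]) (rule Db_le, use that in auto)
  have key: "\<exists>b>0. Df - \<epsilon> \<le> Db b" if eps: "\<epsilon> > 0" for \<epsilon>
  proof -
    obtain b where b: "b > 0" and Eb: "Eb b \<le> ennreal (\<epsilon> / 2)" using Eb_small[of "\<epsilon> / 2"] eps by auto
    have "Df - \<epsilon> \<le> S K (?Bl b)" if K: "K \<in> markov_kernels" for K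
    proof -
      define M where "M = S K (?Bl b)"
      have M0: "M \<ge> 0" unfolding M_def using S_nonneg[OF K Blne] b by simp
      have Mb: "w \<in> cball 0 b \<Longrightarrow> tv_norm (shiftm P0 w \<bind> K) (shiftm P0 (s *\<^sub>R w)) \<le> M" for w
        using S_ge[OF K, of w "?Bl b"] unfolding M_def T_def by simp
      obtain K' where K': "K' \<in> markov_kernels" and
        bnd: "\<And>h A. A \<in> sets borel \<Longrightarrow> emeasure (shiftm P0 h \<bind> K') A \<le> emeasure (shiftm P0 (s *\<^sub>R h)) A + ennreal (M / 2) + Eb b"
        using construct[OF K b Mb] by blast
      have TK': "T K' h \<le> M + \<epsilon>" for h
      proof -
        let ?P = "shiftm P0 h \<bind> K'" and ?Q = "shiftm P0 (s *\<^sub>R h)"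
        have fP: "finite_measure ?P" by (rule bind_props(5)[OF K'])
        have fQ: "finite_measure ?Q" by (rule finite_shiftm)
        have sPQ: "sets ?P = sets ?Q" using bind_props(1)[OF K'] by simp
        have mPQ: "measure ?P (space ?P) = measure ?Q (space ?Q)"
          using bind_props(2,4)[OF K'] emeasure_shiftm_space by (simp add: measure_def)
        have "measure ?P A \<le> measure ?Q A + (M / 2 + \<epsilon> / 2)" if A: "A \<in> sets ?P" for A
        proof -
          have A': "A \<in> sets borel" using A bind_props(1)[OF K'] by simp
          have "ennreal (measure ?P A) = emeasure ?P A"
            using finite_measure.emeasure_eq_measure[OF fP] by metis
          also have "\<dots> \<le> emeasure ?Q A + ennreal (M / 2) + Eb b" by (rule bnd[OF A'])
          also have "\<dots> \<le> ennreal (measure ?Q A) + ennreal (M / 2) + ennreal (\<epsilon> / 2)"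
            using Eb finite_measure.emeasure_eq_measure[OF fQ] by (metis add_left_mono order_refl)
          also have "\<dots> = ennreal (measure ?Q A + (M / 2 + \<epsilon> / 2))"
            using M0 eps by (simp add: measure_nonneg)
          finally have "ennreal (measure ?P A) \<le> ennreal (measure ?Q A + (M / 2 + \<epsilon> / 2))" .
          then show ?thesis
            using M0 eps by (subst (asm) ennreal_le_iff) (auto simp: measure_nonneg intro: add_nonneg_nonneg)
        qed
        then have "tv_norm ?P ?Q \<le> 2 * (M / 2 + \<epsilon> / 2)"
          by (rule tv_upper[OF fP fQ sPQ mPQ])
        then show ?thesis unfolding T_def by simp
      qed
      have "Df \<le> S K' UNIV" unfolding Df_eq by (rule cINF_lower[OF bddbelow K']) simp
      also have "S K' UNIV \<le> M + \<epsilon>" unfolding S_def by (rule cSUP_least) (auto intro: TK')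
      finally show ?thesis unfolding M_def by simp
    qed
    then have "Df - \<epsilon> \<le> Db b" unfolding Db_eq by (intro cINF_greatest[OF MKne])
    then show ?thesis using b by blast
  qed
  have lim: "(Db \<longlongrightarrow> Df) at_top"
  proof (rule order_tendstoI)
    fix y assume "y < Df"
    then obtain b where b: "b > 0" "Df - (Df - y) / 2 \<le> Db b" using key[of "(Df - y) / 2"] by auto
    show "\<forall>\<^sub>F a in at_top. y < Db a"
      unfolding eventually_at_top_linorder
    proof (intro exI allI impI)
      fix a assume "a \<ge> b"
      then have "Db b \<le> Db a" using mono[of b a] b by simp
      moreover have "y < Df - (Df - y) / 2" using \<open>y < Df\<close> by (simp add: field_simps)
      ultimately show "y < Db a" using b(2) by (meson less_le_trans order_trans)
    qed
  next
    fix y assume "Df < y"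
    show "\<forall>\<^sub>F a in at_top. Db a < y"
      unfolding eventually_at_top_linorder
      using Db_Df \<open>Df < y\<close> by (intro exI[of _ 0]) (auto intro: le_less_trans)
  qed
  have "mono_on {0..} Db" by (rule mono_onI) (auto intro: mono)
  with lim show ?thesis by blast
qed

end




lemma ratio_summable:
  fixes a :: real and m :: nat and u :: real
  assumes a: "a > 0" and u: "u \<ge> 0"
  shows "summable (\<lambda>n::nat. exp (- a * real n ^ 2) * (u * real (n + 1) ^ m))"
proof -
  define f where "f n = exp (- a * real n ^ 2) * (u * real (n + 1) ^ m)" for n :: nat
  obtain N :: nat where N: "ln (2 ^ (m + 1)) / a \<le> real N" using real_arch_simple by blast
  have eN: "exp (a * real N) \<ge> 2 ^ (m + 1)"
  proof -
    have "ln (2 ^ (m + 1)) \<le> a * real N" using N a by (simp add: field_simps)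
    then show ?thesis by (metis exp_le_cancel_iff exp_ln zero_less_numeral zero_less_power)
  qed
  have step: "norm (f (Suc n)) \<le> (1/2) * norm (f n)" if n: "n \<ge> N" for n
  proof -
    have f0: "f n \<ge> 0" "f (Suc n) \<ge> 0" unfolding f_def using u by auto
    have p: "real (Suc n + 1) ^ m \<le> 2 ^ m * real (n + 1) ^ m"
    proof -
      have "real (Suc n + 1) ^ m \<le> (2 * real (n + 1)) ^ m" by (intro power_mono) auto
      then show ?thesis by (metis power_mult_distrib)
    qed
    have e1: "exp (- a * real (Suc n) ^ 2) = exp (- a * real n ^ 2) * exp (- a * (2 * real n + 1))"
      by (simp add: exp_add[symmetric] power2_eq_square algebra_simps)
    have e2: "exp (- a * (2 * real n + 1)) \<le> exp (- a * real N)"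
      using a n by simp
    have e3: "exp (- a * real N) * 2 ^ (m + 1) \<le> 1"
      using eN by (simp add: exp_minus field_simps)
    have "f (Suc n) = exp (- a * real n ^ 2) * exp (- a * (2 * real n + 1)) * (u * real (Suc n + 1) ^ m)"
      unfolding f_def e1 ..
    also have "\<dots> \<le> exp (- a * real n ^ 2) * exp (- a * real N) * (u * (2 ^ m * real (n + 1) ^ m))"
      using e2 p u by (intro mult_mono mult_left_mono) auto
    also have "\<dots> = (exp (- a * real N) * 2 ^ (m + 1)) * (f n / 2)"
      unfolding f_def by (simp add: algebra_simps)
    also have "\<dots> \<le> 1 * (f n / 2)"
      using e3 f0 by (intro mult_right_mono) auto
    finally show ?thesis using f0 by simp
  qed
  have "summable f" by (rule summable_ratio_test[of "1/2" N]) (use step in auto)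
  then show ?thesis unfolding f_def .
qed

lemma gauss_int_finite:
  fixes a :: real
  assumes a: "a > 0"
  shows "(\<integral>\<^sup>+x. ennreal (exp (- a * norm x ^ 2)) \<partial>(lborel :: (real^'m) measure)) < \<top>"
proof -
  define u where "u = unit_ball_vol (real CARD('m))"
  define m where "m = CARD('m)"
  have u: "u \<ge> 0" unfolding u_def by simp
  define g where "g n x = ennreal (exp (- a * real n ^ 2)) * indicator (cball (0::real^'m) (real n + 1)) x" for n x
  have pw: "ennreal (exp (- a * norm x ^ 2)) \<le> (\<Sum>n. g n x)" for x :: "real^'m"
  proof -
    define k where "k = nat \<lfloor>norm x\<rfloor>"
    have fl: "0 \<le> \<lfloor>norm x\<rfloor>" by simp
    have rk: "real k = real_of_int \<lfloor>norm x\<rfloor>" unfolding k_def using fl by simp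
    have k1: "real k \<le> norm x" unfolding rk by (rule of_int_floor_le)
    have k2: "norm x \<le> real k + 1" unfolding rk using real_of_int_floor_add_one_gt[of "norm x"] by linarith
    have "exp (- a * norm x ^ 2) \<le> exp (- a * real k ^ 2)"
      using a k1 by (simp add: power_mono)
    then have "ennreal (exp (- a * norm x ^ 2)) \<le> g k x"
      unfolding g_def using k2 by (simp add: ennreal_leI)
    also have "g k x = sum (\<lambda>n. g n x) {k}" by simp
    also have "\<dots> \<le> (\<Sum>n. g n x)" by (rule sum_le_suminf) auto
    finally show ?thesis .
  qed
  have "(\<integral>\<^sup>+x. ennreal (exp (- a * norm x ^ 2)) \<partial>(lborel :: (real^'m) measure)) \<le> (\<integral>\<^sup>+x. (\<Sum>n. g n x) \<partial>lborel)"
    by (rule nn_integral_mono) (rule pw)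
  also have "\<dots> = (\<Sum>n. \<integral>\<^sup>+x. g n x \<partial>lborel)"
    by (rule nn_integral_suminf) (auto simp: g_def intro!: borel_measurable_times_ennreal borel_measurable_indicator)
  also have "\<dots> = (\<Sum>n. ennreal (exp (- a * real n ^ 2) * (u * real (n + 1) ^ m)))"
  proof -
    have "(\<integral>\<^sup>+x. g n x \<partial>lborel) = ennreal (exp (- a * real n ^ 2) * (u * real (n + 1) ^ m))" for n
    proof -
      have "(\<integral>\<^sup>+x. g n x \<partial>lborel) = ennreal (exp (- a * real n ^ 2)) * emeasure lborel (cball (0::real^'m) (real n + 1))"
        unfolding g_def by (rule nn_integral_cmult_indicator) simp
      also have "emeasure lborel (cball (0::real^'m) (real n + 1)) = ennreal (u * (real n + 1) ^ m)"
        unfolding u_def m_def by (subst emeasure_cball) auto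
      finally show ?thesis using u by (simp add: ennreal_mult add.commute)
    qed
    then show ?thesis by simp
  qed
  also have "\<dots> = ennreal (\<Sum>n. exp (- a * real n ^ 2) * (u * real (n + 1) ^ m))"
    by (rule suminf_ennreal2) (use u ratio_summable[OF a u] in auto)
  also have "\<dots> < \<top>" by simp
  finally show ?thesis .
qed


lemma posdef_quad:
  fixes S :: "real^'m^'m"
  assumes pd: "pos_def_matrix S"
  shows "\<exists>\<kappa>>0. \<forall>x. \<kappa> * norm x ^ 2 \<le> x \<bullet> (matrix_inv S *v x)"
proof -
  have pdx: "x \<noteq> 0 \<Longrightarrow> x \<bullet> (S *v x) > 0" for x using pd unfolding pos_def_matrix_def by blast
  have inj: "inj ((*v) S)"
  proof (rule injI)
    fix x y assume "S *v x = S *v y"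
    then have "S *v (x - y) = 0" by (simp add: matrix_vector_mult_diff_distrib)
    then have "\<not> (x - y \<noteq> 0)" using pdx[of "x - y"] by auto
    then show "x = y" by simp
  qed
  have inv: "invertible S"
    using inj matrix_left_invertible_injective invertible_left_inverse by blast
  define Si where "Si = matrix_inv S"
  have SSi: "S ** Si = mat 1"
  proof -
    have "\<exists>A'. S ** A' = mat 1 \<and> A' ** S = mat 1" using inv unfolding invertible_def .
    then have "S ** matrix_inv S = mat 1 \<and> matrix_inv S ** S = mat 1"
      unfolding matrix_inv_def by (rule someI_ex)
    then show ?thesis unfolding Si_def by blast
  qed
  define q where "q y = y \<bullet> (Si *v y)" for y :: "real^'m"
  have qpos: "q y > 0" if y: "y \<noteq> 0" for y
  proof -
    define z where "z = Si *v y"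
    have Sz: "S *v z = y" unfolding z_def by (simp add: matrix_vector_mul_assoc SSi)
    have z0: "z \<noteq> 0" using Sz y by auto
    have "q y = (S *v z) \<bullet> z" unfolding q_def z_def[symmetric] using Sz by simp
    also have "\<dots> = z \<bullet> (S *v z)" by (rule inner_commute)
    finally show ?thesis using pdx[OF z0] by simp
  qed
  have cont: "continuous_on UNIV q"
    unfolding q_def
    by (intro continuous_on_inner continuous_on_id linear_continuous_on matrix_vector_mul_bounded_linear)
  have "compact (sphere (0::real^'m) 1)" by simp
  moreover have "sphere (0::real^'m) 1 \<noteq> {}" by simp
  moreover have "continuous_on (sphere 0 1) q" using cont by (rule continuous_on_subset) simp
  ultimately obtain y0 where y0: "y0 \<in> sphere 0 1" and ymin: "\<And>y. y \<in> sphere 0 1 \<Longrightarrow> q y0 \<le> q y"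
    using continuous_attains_inf[of "sphere (0::real^'m) 1" q] by blast
  have k0: "q y0 > 0" using y0 by (intro qpos) auto
  have hom: "q (c *\<^sub>R y) = c ^ 2 * q y" for c y
    unfolding q_def by (simp add: matrix_vector_mult_scaleR power2_eq_square)
  have "q y0 * norm x ^ 2 \<le> x \<bullet> (matrix_inv S *v x)" for x
  proof (cases "x = 0")
    case True then show ?thesis by simp
  next
    case False
    define u where "u = (1 / norm x) *\<^sub>R x"
    have u: "u \<in> sphere 0 1" unfolding u_def using False by simp
    have xu: "x = norm x *\<^sub>R u" unfolding u_def using False by simp
    have e: "q x = norm x ^ 2 * q u" by (subst xu) (rule hom)
    have le: "q y0 \<le> q u" by (rule ymin[OF u])
    have "q y0 * norm x ^ 2 \<le> q u * norm x ^ 2" by (rule mult_right_mono[OF le]) simp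
    then have "q y0 * norm x ^ 2 \<le> q x" using e by (simp add: mult.commute)
    then show ?thesis unfolding q_def Si_def .
  qed
  then show ?thesis using k0 by (intro exI[of _ "q y0"]) auto
qed

definition gdens :: "real^'m^'m \<Rightarrow> real^'m \<Rightarrow> ennreal" where
  "gdens S x = ennreal ((2 * pi) powr (- real CARD('m) / 2) * det S powr (- 1 / 2)
       * exp (- (1 / 2) * (x \<bullet> (matrix_inv S *v x))))"

lemma gaussian_alt: "gaussian h S = density lborel (\<lambda>x. gdens S (x - h))"
  unfolding gaussian_def gdens_def ..

lemma gdens_meas:
  fixes S :: "real^'m^'m"
  shows "gdens S \<in> borel_measurable borel"
proof -
  have qm[measurable]: "(\<lambda>x::real^'m. x \<bullet> (matrix_inv S *v x)) \<in> borel_measurable borel"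
    by (intro borel_measurable_continuous_onI continuous_on_inner continuous_on_id linear_continuous_on matrix_vector_mul_bounded_linear)
  show ?thesis unfolding gdens_def by measurable
qed

lemma sets_gaussian[simp]: "sets (gaussian h S) = sets borel"
  unfolding gaussian_def by simp

lemma gauss_shift: "gaussian h S = shiftm (gaussian 0 S) h"
proof (rule measure_eqI)
  show "sets (gaussian h S) = sets (shiftm (gaussian 0 S) h)" by (simp add: shiftm_def)
next
  fix A assume "A \<in> sets (gaussian h S)"
  then have A[measurable]: "A \<in> sets borel" by simp
  note gm[measurable] = gdens_meas[of S]
  have "emeasure (gaussian h S) A = (\<integral>\<^sup>+x. gdens S (x - h) * indicator A x \<partial>lborel)"
    unfolding gaussian_alt by (subst emeasure_density) auto
  also have "\<dots> = (\<integral>\<^sup>+x. gdens S (x - h) * indicator A x \<partial>distr lborel borel ((+) h))"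
    by (simp add: lborel_distr_plus)
  also have "\<dots> = (\<integral>\<^sup>+y. gdens S (h + y - h) * indicator A (h + y) \<partial>lborel)"
    by (subst nn_integral_distr) auto
  also have "\<dots> = (\<integral>\<^sup>+y. gdens S (y - 0) * indicator ((\<lambda>z. z + h) -` A) y \<partial>lborel)"
    by (rule nn_integral_cong) (simp add: add.commute indicator_def)
  also have "\<dots> = emeasure (gaussian 0 S) ((\<lambda>z. z + h) -` A)"
    unfolding gaussian_alt by (subst emeasure_density) (auto intro: vimage_borel[OF _ A])
  also have "\<dots> = emeasure (shiftm (gaussian 0 S) h) A"
    unfolding shiftm_def by (subst emeasure_distr) (auto simp: gaussian_alt)
  finally show "emeasure (gaussian h S) A = emeasure (shiftm (gaussian 0 S) h) A" .
qed

lemma gauss_finite: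
  fixes S :: "real^'m^'m"
  assumes pd: "pos_def_matrix S"
  shows "finite_measure (gaussian 0 S)"
proof -
  obtain \<kappa> where k: "\<kappa> > 0" and kq: "\<And>x. \<kappa> * norm x ^ 2 \<le> x \<bullet> (matrix_inv S *v x)"
    using posdef_quad[OF pd] by blast
  define C where "C = (2 * pi) powr (- real CARD('m) / 2) * det S powr (- 1 / 2)"
  have pw: "gdens S x \<le> ennreal \<bar>C\<bar> * ennreal (exp (- (\<kappa> / 2) * norm x ^ 2))" for x :: "real^'m"
  proof -
    have "C * exp (- (1 / 2) * (x \<bullet> (matrix_inv S *v x))) \<le> \<bar>C\<bar> * exp (- (1 / 2) * (x \<bullet> (matrix_inv S *v x)))"
      by (intro mult_right_mono) auto
    also have "\<dots> \<le> \<bar>C\<bar> * exp (- (\<kappa> / 2) * norm x ^ 2)"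
      using kq[of x] by (intro mult_left_mono) auto
    finally have "gdens S x \<le> ennreal (\<bar>C\<bar> * exp (- (\<kappa> / 2) * norm x ^ 2))"
      unfolding gdens_def C_def by (intro ennreal_leI)
    then show ?thesis by (simp add: ennreal_mult)
  qed
  have "emeasure (gaussian 0 S) UNIV = (\<integral>\<^sup>+x. gdens S x \<partial>lborel)"
    unfolding gaussian_alt by (subst emeasure_density) (auto intro: gdens_meas)
  also have "\<dots> \<le> (\<integral>\<^sup>+x. ennreal \<bar>C\<bar> * ennreal (exp (- (\<kappa> / 2) * norm x ^ 2)) \<partial>(lborel :: (real^'m) measure))"
    by (rule nn_integral_mono) (rule pw)
  also have "\<dots> = ennreal \<bar>C\<bar> * (\<integral>\<^sup>+x. ennreal (exp (- (\<kappa> / 2) * norm x ^ 2)) \<partial>(lborel :: (real^'m) measure))"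
    by (rule nn_integral_cmult) measurable
  also have "\<dots> < \<top>"
  proof -
    have fin: "(\<integral>\<^sup>+x. ennreal (exp (- (\<kappa> / 2) * norm x ^ 2)) \<partial>(lborel :: (real^'m) measure)) < \<top>"
      by (rule gauss_int_finite) (use k in simp)
    show ?thesis using fin by (simp add: ennreal_mult_less_top)
  qed
  finally have "emeasure (gaussian 0 S) UNIV \<noteq> \<top>" by simp
  then show ?thesis by (intro finite_measureI) (simp add: gaussian_alt)
qed



theorem lemma1:
  fixes S :: "real^'m^'m" and r :: real
  assumes "pos_def_matrix S" and "r \<ge> 1"
  shows "mono_on {0..} (\<lambda>a. D_bounded r S a)
     \<and> ((\<lambda>a. D_bounded r S a) \<longlongrightarrow> D_full r S) at_top"
proof -
  define P0 where "P0 = gaussian 0 S"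
  have loc: "P0loc P0"
    by (rule P0loc.intro) (simp_all add: P0_def gauss_finite[OF assms(1)])
  have gs: "\<And>h. gaussian h S = shiftm P0 h" unfolding P0_def by (rule gauss_shift)
  have eqb: "(\<lambda>a. D_bounded r S a) = (\<lambda>a. INF K\<in>markov_kernels. SUP h\<in>{h :: real^'m. norm h \<le> a}.
      tv_norm (shiftm P0 h \<bind> K) (shiftm P0 (sqrt r *\<^sub>R h)))"
    unfolding D_bounded_def kernel_image_def gs ..
  have eqf: "D_full r S = (INF K\<in>markov_kernels. SUP h\<in>(UNIV :: (real^'m) set).
      tv_norm (shiftm P0 h \<bind> K) (shiftm P0 (sqrt r *\<^sub>R h)))"
    unfolding D_full_def kernel_image_def gs ..
  show ?thesis
    using P0loc.assemble[OF loc, of "sqrt r"] unfolding eqb eqf .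
qed

end
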